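(* Let $G$ be a modular noetherian right $\ell$-group with degree homomorphism $\deg : G \to \mathbb{Z}$. Then for all $g,h \in G$, \[ \deg(g) + \deg(h) = \deg(g \vee h) + \deg(g \wedge h). \]
   Context: A right $\ell$-group is a group $G$ (identity $e$) with a right-invariant partial order under which $G$ is a lattice ($\wedge$, $\vee$). It is modular if the lattice is modular. It is noetherian if for each $g$ the set $\{h \geq g\}$ satisfies the descending chain condition and the set $\{h \leq g\}$ satisfies the ascending chain condition. Let $G^- = \{g \leq e\}$, and let $X(G^-)$ be the set of elements covered by $e$. In such a group every $g \in G^-$ is a product of elements of $X(G^-)$, and all such factorizations have the same length. The degree homomorphism $\deg : G \to \mathbb{Z}$ is the unique group homomorphism assigning to each $g \in G^-$ this length. *)

theory Defs
  imports "HOL-Algebra.Group"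
begin

definition right_lgroup ::
  "('a, 'b) monoid_scheme \<Rightarrow> ('a \<Rightarrow> 'a \<Rightarrow> bool) \<Rightarrow> ('a \<Rightarrow> 'a \<Rightarrow> 'a) \<Rightarrow> ('a \<Rightarrow> 'a \<Rightarrow> 'a) \<Rightarrow> bool"
where
  "right_lgroup G leq jn mt \<longleftrightarrow>
     group G \<and>
     (\<forall>x\<in>carrier G. leq x x) \<and>
     (\<forall>x\<in>carrier G. \<forall>y\<in>carrier G. leq x y \<and> leq y x \<longrightarrow> x = y) \<and>
     (\<forall>x\<in>carrier G. \<forall>y\<in>carrier G. \<forall>z\<in>carrier G. leq x y \<and> leq y z \<longrightarrow> leq x z) \<and>
     (\<forall>x\<in>carrier G. \<forall>y\<in>carrier G. \<forall>z\<in>carrier G.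
        leq x y \<longrightarrow> leq (x \<otimes>\<^bsub>G\<^esub> z) (y \<otimes>\<^bsub>G\<^esub> z)) \<and>
     (\<forall>x\<in>carrier G. \<forall>y\<in>carrier G.
        jn x y \<in> carrier G \<and> leq x (jn x y) \<and> leq y (jn x y) \<and>
        (\<forall>z\<in>carrier G. leq x z \<and> leq y z \<longrightarrow> leq (jn x y) z)) \<and>
     (\<forall>x\<in>carrier G. \<forall>y\<in>carrier G.
        mt x y \<in> carrier G \<and> leq (mt x y) x \<and> leq (mt x y) y \<and>
        (\<forall>z\<in>carrier G. leq z x \<and> leq z y \<longrightarrow> leq z (mt x y)))"

definition lattice_modular ::
  "'a set \<Rightarrow> ('a \<Rightarrow> 'a \<Rightarrow> bool) \<Rightarrow> ('a \<Rightarrow> 'a \<Rightarrow> 'a) \<Rightarrow> ('a \<Rightarrow> 'a \<Rightarrow> 'a) \<Rightarrow> bool"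
where
  "lattice_modular A leq jn mt \<longleftrightarrow>
     (\<forall>a\<in>A. \<forall>b\<in>A. \<forall>c\<in>A. leq a c \<longrightarrow> jn a (mt b c) = mt (jn a b) c)"

definition lnoetherian ::
  "'a set \<Rightarrow> ('a \<Rightarrow> 'a \<Rightarrow> bool) \<Rightarrow> bool"
where
  "lnoetherian A leq \<longleftrightarrow>
     (\<forall>g\<in>A.
        (\<not> (\<exists>f :: nat \<Rightarrow> 'a. (\<forall>n. f n \<in> A \<and> leq g (f n)) \<and>
              (\<forall>n. leq (f (Suc n)) (f n) \<and> f (Suc n) \<noteq> f n))) \<and>
        (\<not> (\<exists>f :: nat \<Rightarrow> 'a. (\<forall>n. f n \<in> A \<and> leq (f n) g) \<and>
              (\<forall>n. leq (f n) (f (Suc n)) \<and> f (Suc n) \<noteq> f n))))"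

definition neg_cone :: "('a, 'b) monoid_scheme \<Rightarrow> ('a \<Rightarrow> 'a \<Rightarrow> bool) \<Rightarrow> 'a set" where
  "neg_cone G leq = {g \<in> carrier G. leq g \<one>\<^bsub>G\<^esub>}"

definition covered_by_one :: "('a, 'b) monoid_scheme \<Rightarrow> ('a \<Rightarrow> 'a \<Rightarrow> bool) \<Rightarrow> 'a set" where
  "covered_by_one G leq =
     {x \<in> carrier G. leq x \<one>\<^bsub>G\<^esub> \<and> x \<noteq> \<one>\<^bsub>G\<^esub> \<and>
        \<not> (\<exists>z\<in>carrier G. leq x z \<and> leq z \<one>\<^bsub>G\<^esub> \<and> z \<noteq> x \<and> z \<noteq> \<one>\<^bsub>G\<^esub>)}"

definition list_prod :: "('a, 'b) monoid_scheme \<Rightarrow> 'a list \<Rightarrow> 'a" where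
  "list_prod G xs = foldr (\<lambda>x y. x \<otimes>\<^bsub>G\<^esub> y) xs \<one>\<^bsub>G\<^esub>"

definition is_degree_hom ::
  "('a, 'b) monoid_scheme \<Rightarrow> ('a \<Rightarrow> 'a \<Rightarrow> bool) \<Rightarrow> ('a \<Rightarrow> int) \<Rightarrow> bool"
where
  "is_degree_hom G leq d \<longleftrightarrow>
     (\<forall>x\<in>carrier G. \<forall>y\<in>carrier G. d (x \<otimes>\<^bsub>G\<^esub> y) = d x + d y) \<and>
     (\<forall>g\<in>neg_cone G leq. \<forall>xs. set xs \<subseteq> covered_by_one G leq \<and> list_prod G xs = g
        \<longrightarrow> d g = int (length xs))"

end

theory Submission
  imports Defs
begin

locale rlg =
  fixes G :: "('a, 'b) monoid_scheme"
    and leq :: "'a \<Rightarrow> 'a \<Rightarrow> bool"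
    and jn mt :: "'a \<Rightarrow> 'a \<Rightarrow> 'a"
    and deg :: "'a \<Rightarrow> int"
  assumes RL: "right_lgroup G leq jn mt"
    and MOD: "lattice_modular (carrier G) leq jn mt"
    and NOE: "lnoetherian (carrier G) leq"
    and DEG: "is_degree_hom G leq deg"
begin

lemma RLs: "group G \<and>
     (\<forall>x\<in>carrier G. leq x x) \<and>
     (\<forall>x\<in>carrier G. \<forall>y\<in>carrier G. leq x y \<and> leq y x \<longrightarrow> x = y) \<and>
     (\<forall>x\<in>carrier G. \<forall>y\<in>carrier G. \<forall>z\<in>carrier G. leq x y \<and> leq y z \<longrightarrow> leq x z) \<and>
     (\<forall>x\<in>carrier G. \<forall>y\<in>carrier G. \<forall>z\<in>carrier G.
        leq x y \<longrightarrow> leq (x \<otimes>\<^bsub>G\<^esub> z) (y \<otimes>\<^bsub>G\<^esub> z)) \<and>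
     (\<forall>x\<in>carrier G. \<forall>y\<in>carrier G.
        jn x y \<in> carrier G \<and> leq x (jn x y) \<and> leq y (jn x y) \<and>
        (\<forall>z\<in>carrier G. leq x z \<and> leq y z \<longrightarrow> leq (jn x y) z)) \<and>
     (\<forall>x\<in>carrier G. \<forall>y\<in>carrier G.
        mt x y \<in> carrier G \<and> leq (mt x y) x \<and> leq (mt x y) y \<and>
        (\<forall>z\<in>carrier G. leq z x \<and> leq z y \<longrightarrow> leq z (mt x y)))"
  using RL unfolding right_lgroup_def .

lemma grp: "group G" using RLs by (elim conjE)
lemma refl: "x \<in> carrier G \<Longrightarrow> leq x x" using RLs[THEN conjunct2, THEN conjunct1] by (elim ballE) auto
lemma antisym: "x \<in> carrier G \<Longrightarrow> y \<in> carrier G \<Longrightarrow> leq x y \<Longrightarrow> leq y x \<Longrightarrow> x = y"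
  using RLs[THEN conjunct2, THEN conjunct2, THEN conjunct1] by blast
lemma trans: "x \<in> carrier G \<Longrightarrow> y \<in> carrier G \<Longrightarrow> z \<in> carrier G \<Longrightarrow> leq x y \<Longrightarrow> leq y z \<Longrightarrow> leq x z"
  using RLs[THEN conjunct2, THEN conjunct2, THEN conjunct2, THEN conjunct1] by blast
lemma rmono: "x \<in> carrier G \<Longrightarrow> y \<in> carrier G \<Longrightarrow> z \<in> carrier G \<Longrightarrow> leq x y \<Longrightarrow> leq (x \<otimes>\<^bsub>G\<^esub> z) (y \<otimes>\<^bsub>G\<^esub> z)"
  using RLs[THEN conjunct2, THEN conjunct2, THEN conjunct2, THEN conjunct2, THEN conjunct1] by blast
lemma JN: "\<forall>x\<in>carrier G. \<forall>y\<in>carrier G.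
        jn x y \<in> carrier G \<and> leq x (jn x y) \<and> leq y (jn x y) \<and>
        (\<forall>z\<in>carrier G. leq x z \<and> leq y z \<longrightarrow> leq (jn x y) z)"
  using RLs[THEN conjunct2, THEN conjunct2, THEN conjunct2, THEN conjunct2, THEN conjunct2, THEN conjunct1] .
lemma MT: "\<forall>x\<in>carrier G. \<forall>y\<in>carrier G.
        mt x y \<in> carrier G \<and> leq (mt x y) x \<and> leq (mt x y) y \<and>
        (\<forall>z\<in>carrier G. leq z x \<and> leq z y \<longrightarrow> leq z (mt x y))"
  using RLs[THEN conjunct2, THEN conjunct2, THEN conjunct2, THEN conjunct2, THEN conjunct2, THEN conjunct2] .
lemma jnC: "x \<in> carrier G \<Longrightarrow> y \<in> carrier G \<Longrightarrow> jn x y \<in> carrier G" using JN by blast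
lemma jn1: "x \<in> carrier G \<Longrightarrow> y \<in> carrier G \<Longrightarrow> leq x (jn x y)" using JN by blast
lemma jn2: "x \<in> carrier G \<Longrightarrow> y \<in> carrier G \<Longrightarrow> leq y (jn x y)" using JN by blast
lemma jn_least: "x \<in> carrier G \<Longrightarrow> y \<in> carrier G \<Longrightarrow> z \<in> carrier G \<Longrightarrow> leq x z \<Longrightarrow> leq y z \<Longrightarrow> leq (jn x y) z"
  using JN by blast
lemma mtC: "x \<in> carrier G \<Longrightarrow> y \<in> carrier G \<Longrightarrow> mt x y \<in> carrier G" using MT by blast
lemma mt1: "x \<in> carrier G \<Longrightarrow> y \<in> carrier G \<Longrightarrow> leq (mt x y) x" using MT by blast
lemma mt2: "x \<in> carrier G \<Longrightarrow> y \<in> carrier G \<Longrightarrow> leq (mt x y) y" using MT by blast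
lemma mt_greatest: "x \<in> carrier G \<Longrightarrow> y \<in> carrier G \<Longrightarrow> z \<in> carrier G \<Longrightarrow> leq z x \<Longrightarrow> leq z y \<Longrightarrow> leq z (mt x y)"
  using MT by blast
lemma jn: "x \<in> carrier G \<Longrightarrow> y \<in> carrier G \<Longrightarrow> jn x y \<in> carrier G \<and> leq x (jn x y) \<and> leq y (jn x y)"
  using jnC jn1 jn2 by blast
lemma mt: "x \<in> carrier G \<Longrightarrow> y \<in> carrier G \<Longrightarrow> mt x y \<in> carrier G \<and> leq (mt x y) x \<and> leq (mt x y) y"
  using mtC mt1 mt2 by blast
lemma modl: "a \<in> carrier G \<Longrightarrow> b \<in> carrier G \<Longrightarrow> c \<in> carrier G \<Longrightarrow> leq a c \<Longrightarrow> jn a (mt b c) = mt (jn a b) c"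
  using MOD unfolding lattice_modular_def by blast

lemma jn_comm: "x \<in> carrier G \<Longrightarrow> y \<in> carrier G \<Longrightarrow> jn x y = jn y x"
  by (rule antisym) (auto intro: jnC jn_least jn1 jn2)
lemma mt_comm: "x \<in> carrier G \<Longrightarrow> y \<in> carrier G \<Longrightarrow> mt x y = mt y x"
  by (rule antisym) (auto intro: mtC mt_greatest mt1 mt2)

definition cover where
  "cover x y \<longleftrightarrow> x \<in> carrier G \<and> y \<in> carrier G \<and> leq x y \<and> x \<noteq> y \<and>
     (\<forall>z\<in>carrier G. leq x z \<and> leq z y \<longrightarrow> z = x \<or> z = y)"

lemma cover_deg:
  assumes c: "cover x y"
  shows "deg x = deg y + 1"
proof -
  interpret group G by (rule grp)
  have xC: "x \<in> carrier G" and yC: "y \<in> carrier G" and xy: "leq x y" and ne: "x \<noteq> y"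
    and cv: "\<And>z. z \<in> carrier G \<Longrightarrow> leq x z \<Longrightarrow> leq z y \<Longrightarrow> z = x \<or> z = y"
    using c unfolding cover_def by auto
  define u where "u = x \<otimes>\<^bsub>G\<^esub> inv\<^bsub>G\<^esub> y"
  have uC: "u \<in> carrier G" using xC yC u_def by simp
  have xu: "x = u \<otimes>\<^bsub>G\<^esub> y" using xC yC u_def by (simp add: m_assoc)
  have u1: "leq u \<one>\<^bsub>G\<^esub>" using rmono[OF xC yC inv_closed[OF yC] xy] yC u_def by simp
  have un1: "u \<noteq> \<one>\<^bsub>G\<^esub>" using xu ne yC by auto
  have nob: "\<not> (\<exists>z\<in>carrier G. leq u z \<and> leq z \<one>\<^bsub>G\<^esub> \<and> z \<noteq> u \<and> z \<noteq> \<one>\<^bsub>G\<^esub>)"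
  proof
    assume "\<exists>z\<in>carrier G. leq u z \<and> leq z \<one>\<^bsub>G\<^esub> \<and> z \<noteq> u \<and> z \<noteq> \<one>\<^bsub>G\<^esub>"
    then obtain z where zC: "z \<in> carrier G" and "leq u z" "leq z \<one>\<^bsub>G\<^esub>" "z \<noteq> u" "z \<noteq> \<one>\<^bsub>G\<^esub>" by blast
    have "leq x (z \<otimes>\<^bsub>G\<^esub> y)" using rmono[OF uC zC yC \<open>leq u z\<close>] xu by simp
    moreover have "leq (z \<otimes>\<^bsub>G\<^esub> y) y" using rmono[OF zC one_closed yC \<open>leq z \<one>\<^bsub>G\<^esub>\<close>] yC by simp
    ultimately have "z \<otimes>\<^bsub>G\<^esub> y = x \<or> z \<otimes>\<^bsub>G\<^esub> y = y" using cv[of "z \<otimes>\<^bsub>G\<^esub> y"] zC yC m_closed by blast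
    thus False
    proof
      assume "z \<otimes>\<^bsub>G\<^esub> y = x"
      hence "z \<otimes>\<^bsub>G\<^esub> y = u \<otimes>\<^bsub>G\<^esub> y" using xu by simp
      hence "z = u" using right_cancel zC uC yC by blast
      thus False using \<open>z \<noteq> u\<close> by simp
    next
      assume "z \<otimes>\<^bsub>G\<^esub> y = y"
      hence "z = \<one>\<^bsub>G\<^esub>" using zC yC by simp
      thus False using \<open>z \<noteq> \<one>\<^bsub>G\<^esub>\<close> by simp
    qed
  qed
  have ucov: "u \<in> covered_by_one G leq" unfolding covered_by_one_def using uC u1 un1 nob by blast
  have "u \<in> neg_cone G leq" unfolding neg_cone_def using uC u1 by blast
  moreover have lp: "list_prod G [u] = u" unfolding list_prod_def using uC by simp
  moreover have H: "\<forall>g\<in>neg_cone G leq. \<forall>xs. set xs \<subseteq> covered_by_one G leq \<and> list_prod G xs = g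
        \<longrightarrow> deg g = int (length xs)" using DEG unfolding is_degree_hom_def by (elim conjE)
  ultimately have "set [u] \<subseteq> covered_by_one G leq \<and> list_prod G [u] = u \<longrightarrow> deg u = int (length [u])"
    by blast
  hence "deg u = int (length [u])" using ucov lp by simp
  hence "deg u = 1" by simp
  moreover have "deg x = deg u + deg y" using DEG uC yC xu unfolding is_degree_hom_def by auto
  ultimately show ?thesis by simp
qed

lemma exists_cover:
  assumes xC: "x \<in> carrier G" and aC: "a \<in> carrier G" and xa: "leq x a" and ne: "x \<noteq> a"
  shows "\<exists>y. cover x y \<and> leq y a"
proof -
  define R where "R = {(y', y). y' \<in> carrier G \<and> y \<in> carrier G \<and> leq x y' \<and> leq y' y \<and> y' \<noteq> y}"
  have wfR: "wf R"
    unfolding wf_iff_no_infinite_down_chain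
  proof
    assume "\<exists>f. \<forall>i. (f (Suc i), f i) \<in> R"
    then obtain f where f: "\<And>i. (f (Suc i), f i) \<in> R" by blast
    have A: "\<forall>n. f n \<in> carrier G \<and> leq x (f n)"
    proof
      fix n
      from f[of n] f[of "Suc n"] have "f n \<in> carrier G" "f (Suc n) \<in> carrier G"
        "leq x (f (Suc n))" "leq (f (Suc n)) (f n)" unfolding R_def by auto
      thus "f n \<in> carrier G \<and> leq x (f n)" using trans xC by blast
    qed
    have B: "\<forall>n. leq (f (Suc n)) (f n) \<and> f (Suc n) \<noteq> f n" using f unfolding R_def by auto
    show False using NOE xC A B unfolding lnoetherian_def by blast
  qed
  define Q where "Q = {y \<in> carrier G. leq x y \<and> leq y a \<and> y \<noteq> x}"
  have "a \<in> Q" unfolding Q_def using aC xa ne refl by auto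
  then obtain y where yQ: "y \<in> Q" and ymin: "\<forall>z. (z, y) \<in> R \<longrightarrow> z \<notin> Q"
    using wfE_min[OF wfR] by metis
  have "cover x y"
    unfolding cover_def
  proof (intro conjI ballI impI)
    fix z assume zC: "z \<in> carrier G" and "leq x z \<and> leq z y"
    show "z = x \<or> z = y"
    proof (rule ccontr)
      assume "\<not> (z = x \<or> z = y)"
      hence "(z, y) \<in> R" "z \<in> Q" using zC \<open>leq x z \<and> leq z y\<close> yQ aC trans[of z y a]
        unfolding R_def Q_def by auto
      thus False using ymin by blast
    qed
  qed (use yQ xC in \<open>auto simp: Q_def\<close>)
  thus ?thesis using yQ Q_def by auto
qed

lemma back_lem:
  assumes aC: "a \<in> carrier G" and bC: "b \<in> carrier G" and xC: "x \<in> carrier G"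
    and mx: "leq (mt a b) x" and xa: "leq x a"
  shows "mt (jn x b) a = x"
proof -
  have mC: "mt a b \<in> carrier G" using mt aC bC by blast
  have "jn x (mt b a) = mt (jn x b) a" using modl[OF xC bC aC xa] .
  moreover have "mt b a = mt a b" using mt_comm aC bC by simp
  moreover have "jn x (mt a b) = x" by (rule antisym) (auto intro: jnC jn_least jn1 refl mC xC mx)
  ultimately show ?thesis by simp
qed

lemma cover_transpose:
  assumes aC: "a \<in> carrier G" and bC: "b \<in> carrier G"
    and mx: "leq (mt a b) x" and ya: "leq y a" and c: "cover x y"
  shows "cover (jn x b) (jn y b)"
proof -
  have xC: "x \<in> carrier G" and yC: "y \<in> carrier G" and xy: "leq x y" and ne: "x \<noteq> y"
    and cv: "\<And>z. z \<in> carrier G \<Longrightarrow> leq x z \<Longrightarrow> leq z y \<Longrightarrow> z = x \<or> z = y"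
    using c unfolding cover_def by auto
  have mC: "mt a b \<in> carrier G" using mt aC bC by blast
  have xa: "leq x a" using trans xC yC aC xy ya by blast
  have my: "leq (mt a b) y" using trans mC xC yC mx xy by blast
  have bx: "mt (jn x b) a = x" using back_lem aC bC xC mx xa by blast
  have byy: "mt (jn y b) a = y" using back_lem aC bC yC my ya by blast
  have jxC: "jn x b \<in> carrier G" and jyC: "jn y b \<in> carrier G" using jn xC yC bC by auto
  have le: "leq (jn x b) (jn y b)"
    by (rule jn_least) (auto intro: jnC jn2 trans[OF xC yC jnC[OF yC bC] xy jn1[OF yC bC]] xC yC bC)
  have jne: "jn x b \<noteq> jn y b" using bx byy ne by metis
  have jab: "leq (jn y b) (jn a b)" by (rule jn_least) (auto intro: jnC jn2 trans[OF yC aC jnC[OF aC bC] ya jn1[OF aC bC]] yC aC bC)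
  have "\<forall>z\<in>carrier G. leq (jn x b) z \<and> leq z (jn y b) \<longrightarrow> z = jn x b \<or> z = jn y b"
  proof (intro ballI impI)
    fix z assume zC: "z \<in> carrier G" and zz: "leq (jn x b) z \<and> leq z (jn y b)"
    define w where "w = mt z a"
    have wC: "w \<in> carrier G" using mt zC aC w_def by blast
    have xz: "leq x z" using trans[OF xC jxC zC jn1[OF xC bC]] zz by blast
    have xw: "leq x w" unfolding w_def using mt_greatest zC aC xC xz xa by blast
    have wy: "leq w y"
    proof -
      have "leq w (jn y b)" using trans[OF wC zC jyC] mt1[OF zC aC] zz w_def by blast
      moreover have "leq w a" using mt zC aC w_def by blast
      ultimately have "leq w (mt (jn y b) a)" using mt_greatest jyC aC wC by blast
      thus ?thesis using byy by simp
    qed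
    have wxy: "w = x \<or> w = y" using cv wC xw wy by blast
    have bz: "leq b z" using trans[OF bC jxC zC jn2[OF xC bC]] zz by blast
    have "jn b (mt a z) = mt (jn b a) z" using modl[OF bC aC zC bz] .
    moreover have "mt (jn b a) z = z"
    proof -
      have "leq z (jn b a)" using trans[OF zC jyC jnC[OF aC bC]] zz jab jn_comm[OF aC bC] by simp
      thus ?thesis by (intro antisym) (auto intro: mtC mt2 mt_greatest refl zC jnC aC bC)
    qed
    moreover have "jn b (mt a z) = jn w b" unfolding w_def using jn_comm[OF bC mtC[OF aC zC]] mt_comm[OF aC zC] by simp
    ultimately have "z = jn w b" by simp
    thus "z = jn x b \<or> z = jn y b" using wxy by auto
  qed
  thus ?thesis unfolding cover_def using jxC jyC le jne by blast
qed

lemma main_ind: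
  assumes aC: "a \<in> carrier G" and bC: "b \<in> carrier G"
  shows "x \<in> carrier G \<longrightarrow> leq (mt a b) x \<longrightarrow> leq x a \<longrightarrow>
           deg x - deg a = deg (jn x b) - deg (jn a b)"
proof -
  define S where "S = {(x', x). x' \<in> carrier G \<and> x \<in> carrier G \<and> leq x' a \<and> leq x x' \<and> x \<noteq> x'}"
  have wfS: "wf S"
    unfolding wf_iff_no_infinite_down_chain
  proof
    assume "\<exists>f. \<forall>i. (f (Suc i), f i) \<in> S"
    then obtain f where f: "\<And>i. (f (Suc i), f i) \<in> S" by blast
    have A: "\<forall>n. f n \<in> carrier G \<and> leq (f n) a"
    proof
      fix n
      from f[of n] have "f n \<in> carrier G" "f (Suc n) \<in> carrier G"
        "leq (f (Suc n)) a" "leq (f n) (f (Suc n))" unfolding S_def by auto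
      thus "f n \<in> carrier G \<and> leq (f n) a" using trans aC by blast
    qed
    have B: "\<forall>n. leq (f n) (f (Suc n)) \<and> f (Suc n) \<noteq> f n"
    proof
      fix n show "leq (f n) (f (Suc n)) \<and> f (Suc n) \<noteq> f n" using f[of n] unfolding S_def by auto
    qed
    show False using NOE aC A B unfolding lnoetherian_def by blast
  qed
  show ?thesis
  proof (induction x rule: wf_induct[OF wfS])
    case (1 x)
    show ?case
    proof (intro impI)
      assume xC: "x \<in> carrier G" and mx: "leq (mt a b) x" and xa: "leq x a"
      show "deg x - deg a = deg (jn x b) - deg (jn a b)"
      proof (cases "x = a")
        case True thus ?thesis by simp
      next
        case False
        then obtain y where c: "cover x y" and ya: "leq y a" using exists_cover xC aC xa by blast
        have yC: "y \<in> carrier G" and xy: "leq x y" and ne: "x \<noteq> y" using c cover_def by auto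
        have "(y, x) \<in> S" unfolding S_def using yC xC ya xy ne by auto
        moreover have my: "leq (mt a b) y" using trans[OF mtC[OF aC bC] xC yC] mx xy by blast
        ultimately have IH: "deg y - deg a = deg (jn y b) - deg (jn a b)" using 1 yC ya by blast
        have "deg x = deg y + 1" using cover_deg c by blast
        moreover have "deg (jn x b) = deg (jn y b) + 1"
          using cover_deg cover_transpose aC bC mx ya c by blast
        ultimately show ?thesis using IH by simp
      qed
    qed
  qed
qed

lemma final:
  assumes aC: "a \<in> carrier G" and bC: "b \<in> carrier G"
  shows "deg a + deg b = deg (jn a b) + deg (mt a b)"
proof -
  have mC: "mt a b \<in> carrier G" and ma: "leq (mt a b) a" and mb: "leq (mt a b) b" using mt aC bC by auto
  have "deg (mt a b) - deg a = deg (jn (mt a b) b) - deg (jn a b)"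
    using main_ind[OF aC bC, of "mt a b"] mC ma refl by blast
  moreover have "jn (mt a b) b = b" by (rule antisym) (auto intro: jnC jn_least jn2 refl mC bC mb)
  ultimately show ?thesis by simp
qed

end

theorem mainTheorem4:
  fixes G :: "('a, 'b) monoid_scheme"
    and leq :: "'a \<Rightarrow> 'a \<Rightarrow> bool"
    and jn mt :: "'a \<Rightarrow> 'a \<Rightarrow> 'a"
    and deg :: "'a \<Rightarrow> int"
  assumes "right_lgroup G leq jn mt"
    and "lattice_modular (carrier G) leq jn mt"
    and "lnoetherian (carrier G) leq"
    and "is_degree_hom G leq deg"
    and "g \<in> carrier G" and "h \<in> carrier G"
  shows "deg g + deg h = deg (jn g h) + deg (mt g h)"
proof -
  interpret rlg G leq jn mt deg using assms(1-4) by unfold_locales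
  show ?thesis using final assms(5,6) by blast
qed

end
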